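(* Let $\epsilon=(\epsilon_n)$ and $\epsilon'=(\epsilon'_n)$ be sequences with $0<\epsilon_n,\epsilon'_n\le1$. Then $A^\epsilon\subseteq A^{\epsilon'}$ if and only if there exists $C>0$ with $\epsilon'_n\le C\epsilon_n$ for all $n$. In particular, $A^\epsilon=A^{\epsilon'}$ if and only if there exists $C>0$ with $C^{-1}\epsilon_n\le\epsilon'_n\le C\epsilon_n$ for all $n$.
   Context: For a sequence $\epsilon=(\epsilon_n)$ in $(0,1]$, $A^\epsilon=\{(x_n)\in\mathbb{C}^{\mathbb{N}}:\sup_n|x_n|^{\epsilon_n}<\infty\}$, where $|\cdot|$ is the Euclidean norm on $\mathbb{C}$. *)

theory Defs
  imports "HOL-Analysis.Analysis"
begin

text \<open>The space A^eps of complex sequences x with sup_n |x_n|^(eps_n) finite.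
  Since eps_n > 0, |x_n|^(eps_n) is computed with powr (0 powr e = 0 is correct here).\<close>
definition A_eps :: "(nat \<Rightarrow> real) \<Rightarrow> (nat \<Rightarrow> complex) set" where
  "A_eps eps = {x. bdd_above (range (\<lambda>n. cmod (x n) powr eps n))}"

end

theory Submission
  imports Defs
begin

lemma incl_iff:
  fixes eps eps' :: "nat \<Rightarrow> real"
  assumes e: "\<And>n. 0 < eps n \<and> eps n \<le> 1"
    and e': "\<And>n. 0 < eps' n \<and> eps' n \<le> 1"
  shows "A_eps eps \<subseteq> A_eps eps' \<longleftrightarrow> (\<exists>C>0. \<forall>n. eps' n \<le> C * eps n)"
proof
  assume sub: "A_eps eps \<subseteq> A_eps eps'"
  define x where "x n = complex_of_real (exp (1 / eps n))" for n
  have cm: "cmod (x n) = exp (1 / eps n)" for n by (simp add: x_def)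
  have p1: "cmod (x n) powr eps n = exp 1" for n
    using e[of n] by (simp add: cm powr_def)
  have p2: "cmod (x n) powr eps' n = exp (eps' n / eps n)" for n
    using e[of n] by (simp add: cm powr_def)
  have "x \<in> A_eps eps" unfolding A_eps_def by (simp add: p1)
  with sub have "x \<in> A_eps eps'" by blast
  then obtain M where M: "\<And>n. exp (eps' n / eps n) \<le> M"
    unfolding A_eps_def bdd_above_def by (auto simp: p2)
  have Mpos: "M > 0" using M[of 0] by (meson exp_gt_zero less_le_trans)
  show "\<exists>C>0. \<forall>n. eps' n \<le> C * eps n"
  proof (intro exI[of _ "max 1 (ln M)"] conjI allI)
    fix n
    have "eps' n / eps n \<le> ln M" using M[of n] Mpos
      by (metis exp_le_cancel_iff exp_ln)
    hence "eps' n / eps n \<le> max 1 (ln M)" by linarith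
    thus "eps' n \<le> max 1 (ln M) * eps n" using e[of n] by (simp add: divide_le_eq)
  qed simp
next
  assume "\<exists>C>0. \<forall>n. eps' n \<le> C * eps n"
  then obtain C where C: "C > 0" "\<And>n. eps' n \<le> C * eps n" by auto
  show "A_eps eps \<subseteq> A_eps eps'"
  proof
    fix x assume "x \<in> A_eps eps"
    then obtain M where M: "\<And>n. cmod (x n) powr eps n \<le> M"
      unfolding A_eps_def bdd_above_def by auto
    define M' where "M' = max 1 M"
    have b: "cmod (x n) powr eps' n \<le> max 1 (M' powr C)" for n
    proof (cases "cmod (x n) \<le> 1")
      case True
      then have "cmod (x n) powr eps' n \<le> 1"
        using e'[of n] powr_mono2[of "eps' n" "cmod (x n)" 1] by simp
      thus ?thesis by linarith
    next
      case False
      hence gt: "cmod (x n) > 1" by simp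
      have "cmod (x n) powr eps' n \<le> cmod (x n) powr (C * eps n)"
        using gt C(2)[of n] by (simp add: powr_mono)
      also have "\<dots> = (cmod (x n) powr eps n) powr C"
        by (simp add: powr_powr mult.commute)
      also have "\<dots> \<le> M' powr C"
        using M[of n] C(1) by (intro powr_mono2) (auto simp: M'_def)
      finally show ?thesis by linarith
    qed
    thus "x \<in> A_eps eps'" unfolding A_eps_def bdd_above_def by auto
  qed
qed

theorem mainTheorem9:
  fixes eps eps' :: "nat \<Rightarrow> real"
  assumes "\<And>n. 0 < eps n \<and> eps n \<le> 1"
    and "\<And>n. 0 < eps' n \<and> eps' n \<le> 1"
  shows "(A_eps eps \<subseteq> A_eps eps' \<longleftrightarrow> (\<exists>C>0. \<forall>n. eps' n \<le> C * eps n))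
    \<and> (A_eps eps = A_eps eps' \<longleftrightarrow>
         (\<exists>C>0. \<forall>n. eps n / C \<le> eps' n \<and> eps' n \<le> C * eps n))"
proof
  show i1: "A_eps eps \<subseteq> A_eps eps' \<longleftrightarrow> (\<exists>C>0. \<forall>n. eps' n \<le> C * eps n)"
    using incl_iff assms by blast
  have i2: "A_eps eps' \<subseteq> A_eps eps \<longleftrightarrow> (\<exists>C>0. \<forall>n. eps n \<le> C * eps' n)"
    using incl_iff[of eps' eps] assms by blast
  show "A_eps eps = A_eps eps' \<longleftrightarrow>
         (\<exists>C>0. \<forall>n. eps n / C \<le> eps' n \<and> eps' n \<le> C * eps n)"
  proof
    assume "A_eps eps = A_eps eps'"
    then obtain C1 C2 where c1: "C1 > 0" "\<And>n. eps' n \<le> C1 * eps n"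
      and c2: "C2 > 0" "\<And>n. eps n \<le> C2 * eps' n" using i1 i2 by auto
    show "\<exists>C>0. \<forall>n. eps n / C \<le> eps' n \<and> eps' n \<le> C * eps n"
    proof (intro exI[of _ "max C1 C2"] conjI allI)
      fix n
      have p: "eps n > 0" "eps' n > 0" using assms[of n] by auto
      have "eps n \<le> max C1 C2 * eps' n"
        using c2(2)[of n] p by (smt (verit) mult_right_mono)
      thus "eps n / max C1 C2 \<le> eps' n" using c1 by (simp add: divide_le_eq mult.commute)
      show "eps' n \<le> max C1 C2 * eps n"
        using c1(2)[of n] p by (smt (verit) mult_right_mono)
    qed (use c1 in simp)
  next
    assume "\<exists>C>0. \<forall>n. eps n / C \<le> eps' n \<and> eps' n \<le> C * eps n"
    then obtain C where C: "C > 0" "\<And>n. eps n / C \<le> eps' n \<and> eps' n \<le> C * eps n" by auto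
    have "\<forall>n. eps n \<le> C * eps' n" using C by (simp add: divide_le_eq mult.commute)
    then have "A_eps eps' \<subseteq> A_eps eps" using i2 C(1) by blast
    moreover have "A_eps eps \<subseteq> A_eps eps'" using i1 C by blast
    ultimately show "A_eps eps = A_eps eps'" by blast
  qed
qed

end
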